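(* Let $0<d\le 1$ and $0<\varepsilon<1/12$ be real numbers, and let $G$ be a balanced bipartite graph on $n$ vertices with (bipartite) density $d_G$, where $$n> \exp\!\big(10 \log (1/d)\, \log (1/\varepsilon)/\varepsilon^2\big).$$ Then the edge set of $G$ can be written as an edge-disjoint union $$E(G)=E(H_0)\cup E(H_1)\cup\dots\cup E(H_K),$$ where $H_0,H_1,\dots,H_K$ are balanced bipartite subgraphs of $G$ such that: for every $1\le i\le K$, $H_i$ is an $(\varepsilon, d-\varepsilon)$-super-regular pair with bipartite density at least $d$ and with at least $m$ vertices in each of its two parts, where $$m \ge d^{(10/\varepsilon^2)\log (1/\varepsilon)}\, n/2;$$ $H_0$ has bipartite density less than $d$; and $$K \le 2d_G \cdot d^{-(20/\varepsilon^2)\log (1/\varepsilon)}/d .$$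
   Context: All graphs are simple; $\log$ denotes the natural logarithm. A bipartite graph is balanced if its two parts have equal size. For a bipartite graph with parts $A,B$ (or disjoint vertex sets $A,B$ in a graph), $e(A,B)$ is the number of edges between $A$ and $B$ and the (bipartite) density is $d(A,B)=e(A,B)/(|A|\,|B|)$; for a bipartite graph "density" means this bipartite density between its two parts. A bipartite graph $H=(A,B;E)$ is $\varepsilon$-regular if $|d(A,B)-d(X,Y)|\le\varepsilon$ for all $X\subseteq A$, $Y\subseteq B$ with $|X|\ge\varepsilon|A|$, $|Y|\ge\varepsilon|B|$. It is an $(\varepsilon,\delta)$-super-regular pair if it is $\varepsilon$-regular, every vertex of $A$ has at least $\delta|B|$ neighbours in $B$, and every vertex of $B$ has at least $\delta|A|$ neighbours in $A$. *)

theory Defs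
  imports Complex_Main
begin

text \<open>A bipartite graph with parts X, Y is represented by an edge set
  E of ordered pairs (x,y) with x in X and y in Y (only pairs in X \<times> Y count).\<close>

definition bip_density :: "'a set \<Rightarrow> 'a set \<Rightarrow> ('a \<times> 'a) set \<Rightarrow> real" where
  "bip_density X Y E = real (card (E \<inter> (X \<times> Y))) / (real (card X) * real (card Y))"

definition eps_regular :: "real \<Rightarrow> 'a set \<Rightarrow> 'a set \<Rightarrow> ('a \<times> 'a) set \<Rightarrow> bool" where
  "eps_regular \<epsilon> X Y E \<longleftrightarrow>
     (\<forall>X' Y'. X' \<subseteq> X \<longrightarrow> Y' \<subseteq> Y \<longrightarrow> real (card X') \<ge> \<epsilon> * real (card X)
        \<longrightarrow> real (card Y') \<ge> \<epsilon> * real (card Y)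
        \<longrightarrow> \<bar>bip_density X Y E - bip_density X' Y' E\<bar> \<le> \<epsilon>)"

definition super_regular :: "real \<Rightarrow> real \<Rightarrow> 'a set \<Rightarrow> 'a set \<Rightarrow> ('a \<times> 'a) set \<Rightarrow> bool" where
  "super_regular \<epsilon> \<delta> X Y E \<longleftrightarrow>
     eps_regular \<epsilon> X Y E \<and>
     (\<forall>x\<in>X. real (card {y\<in>Y. (x, y) \<in> E}) \<ge> \<delta> * real (card Y)) \<and>
     (\<forall>y\<in>Y. real (card {x\<in>X. (x, y) \<in> E}) \<ge> \<delta> * real (card X))"

definition balanced_bip_subgraph ::
  "'a set \<Rightarrow> 'a set \<Rightarrow> ('a \<times> 'a) set \<Rightarrow> 'a set \<Rightarrow> 'a set \<Rightarrow> ('a \<times> 'a) set \<Rightarrow> bool" where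
  "balanced_bip_subgraph X' Y' F A B E \<longleftrightarrow>
     X' \<subseteq> A \<and> Y' \<subseteq> B \<and> card X' = card Y' \<and> F \<subseteq> E \<inter> (X' \<times> Y')"

end

theory Submission
  imports Defs "HOL-Analysis.Convex"
begin


lemma bern:
  fixes y r :: real
  assumes "0 \<le> r" "r \<le> 1" "0 \<le> y"
  shows "y powr r \<le> r*y + (1-r)"
proof (cases "y = 0")
  case True then show ?thesis using assms by simp
next
  case False
  then have "y powr r * 1 powr (1-r) \<le> r*y + (1-r)*1"
    using Youngs_inequality_0[of r "1-r" y 1] assms by simp
  then show ?thesis by simp
qed

lemma param_facts:
  fixes \<epsilon> L \<gamma> :: real
  assumes "0 < \<epsilon>" "\<epsilon> < 1/12" "L = ln (1/\<epsilon>)" "\<gamma> = \<epsilon>^2/(10*L)"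
  shows "L \<ge> 1 - \<epsilon>" "L > 0" "\<gamma> > 0" "\<gamma> * L = \<epsilon>^2/10" "\<gamma> < \<epsilon>"
    "\<gamma> * (1 + 2*L) < \<epsilon>^2"
proof -
  have "ln \<epsilon> \<le> \<epsilon> - 1" using ln_le_minus_one assms by auto
  moreover have "ln (1/\<epsilon>) = - ln \<epsilon>" using assms by (simp add: ln_div)
  ultimately show L1: "L \<ge> 1 - \<epsilon>" using assms by simp
  then show L0: "L > 0" using assms by simp
  show "\<gamma> > 0" using assms L0 by simp
  show "\<gamma> * L = \<epsilon>^2/10" using assms L0 by simp
  have "\<gamma> \<le> \<epsilon>^2 / (10*(1-\<epsilon>))" unfolding assms(4)
    using L1 L0 assms by (intro divide_left_mono) auto
  also have "\<dots> < \<epsilon>" using assms by (simp add: field_simps power2_eq_square)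
  finally show "\<gamma> < \<epsilon>" .
  have "\<gamma> * (1 + 2*L) = \<epsilon>^2 * ((1 + 2*L)/(10*L))" using assms by simp
  also have "\<dots> < \<epsilon>^2 * 1"
    using L1 L0 assms by (intro mult_strict_left_mono) (auto simp: field_simps)
  finally show "\<gamma> * (1 + 2*L) < \<epsilon>^2" by simp
qed

lemma up_real:
  fixes \<epsilon> L \<gamma> p :: real
  assumes "0 < \<epsilon>" "\<epsilon> < 1/12" "L = ln (1/\<epsilon>)" "\<gamma> = \<epsilon>^2/(10*L)"
    "0 \<le> p" "p \<le> 1"
  shows "p < (p+\<epsilon>) * \<epsilon> powr \<gamma>"
proof -
  note pf = param_facts[OF assms(1-4)]
  have "\<epsilon> powr \<gamma> = exp (- (\<gamma> * L))"
    using assms by (simp add: powr_def ln_div)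
  also have "\<dots> \<ge> 1 - \<gamma> * L" using exp_ge_add_one_self[of "-(\<gamma>*L)"] by simp
  finally have e: "\<epsilon> powr \<gamma> \<ge> 1 - \<epsilon>^2/10" using pf by simp
  have "(p+\<epsilon>) * (1 - \<epsilon>^2/10) \<le> (p+\<epsilon>) * \<epsilon> powr \<gamma>"
    using e assms by (intro mult_left_mono) auto
  moreover have "p < (p+\<epsilon>) * (1 - \<epsilon>^2/10)"
  proof -
    have "(p+\<epsilon>) * \<epsilon>^2/10 \<le> 2 * \<epsilon>^2/10" using assms
      by (intro divide_right_mono) (auto intro!: mult_right_mono)
    also have "\<dots> < \<epsilon>" using assms by (simp add: power2_eq_square)
    finally show ?thesis by (simp add: algebra_simps)
  qed
  ultimately show ?thesis by linarith
qed

lemma down_real: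
  fixes a b p e1 e2 e3 \<epsilon> \<gamma> L :: real
  assumes "0 < \<epsilon>" "\<epsilon> < 1/12" "L = ln (1/\<epsilon>)" "\<gamma> = \<epsilon>^2/(10*L)"
    "\<epsilon> \<le> a" "a \<le> 1" "\<epsilon> \<le> b" "b \<le> 1" "0 < p" "p \<le> 1"
    "e1 < (p-\<epsilon>)*a*b" "0 \<le> e2" "0 \<le> e3"
    "a < 1 \<Longrightarrow> e2 * (1-a) powr \<gamma> \<le> p*(1-a)" "a = 1 \<Longrightarrow> e2 = 0"
    "b < 1 \<Longrightarrow> e3 * (min a (1-b)) powr \<gamma> \<le> p*(a*(1-b))" "b = 1 \<Longrightarrow> e3 = 0"
    "e1+e2+e3 = p"
  shows False
proof -
  note pf = param_facts[OF assms(1-4)]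
  have g1: "\<gamma> < 1" using pf(5) assms(2) by linarith
  have h2: "e2 \<le> p*(1-a) + p*\<gamma>*a"
  proof (cases "a = 1")
    case True then show ?thesis using assms pf by simp
  next
    case False
    then have a1: "a < 1" using assms by simp
    have pos: "(1-a) powr \<gamma> > 0" using a1 by simp
    have "e2 \<le> p*(1-a) / (1-a) powr \<gamma>" using assms(14)[OF a1] pos
      by (simp add: field_simps)
    also have "\<dots> = p * (1-a) powr (1-\<gamma>)"
      using a1 by (simp add: powr_diff)
    also have "\<dots> \<le> p * ((1-\<gamma>)*(1-a) + (1-(1-\<gamma>)))"
      using bern[of "1-\<gamma>" "1-a"] pf g1 a1 assms by (intro mult_left_mono) auto
    also have "\<dots> = p*(1-a) + p*\<gamma>*a" by (simp add: algebra_simps)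
    finally show ?thesis .
  qed
  have h3: "e3 \<le> p*a*(1-b) + p*\<gamma>*a*(2*L)"
  proof (cases "b = 1")
    case True then show ?thesis using assms pf by simp
  next
    case False
    then have b1: "b < 1" using assms by simp
    define m where "m = min a (1-b)"
    have m0: "m > 0" using b1 assms unfolding m_def by simp
    have pos: "m powr \<gamma> > 0" using m0 by simp
    have e3: "e3 \<le> p*a*(1-b) / m powr \<gamma>" using assms(16)[OF b1] pos
      by (simp add: field_simps m_def)
    show ?thesis
    proof (cases "1 - b \<le> a")
      case True
      then have "m = 1 - b" unfolding m_def by simp
      then have "p*a*(1-b) / m powr \<gamma> = p*a * (1-b) powr (1-\<gamma>)"
        using b1 by (simp add: powr_diff)
      also have "\<dots> \<le> p*a * ((1-\<gamma>)*(1-b) + (1-(1-\<gamma>)))"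
        using bern[of "1-\<gamma>" "1-b"] pf g1 b1 assms by (intro mult_left_mono) auto
      also have "\<dots> = p*a*(1-b) + p*\<gamma>*a*b" by (simp add: algebra_simps)
      also have "\<dots> \<le> p*a*(1-b) + p*\<gamma>*a*(2*L)"
        using pf assms by (intro add_left_mono mult_left_mono) auto
      finally show ?thesis using e3 by simp
    next
      case False
      then have "m = a" unfolding m_def by simp
      have "a powr (-\<gamma>) \<le> \<epsilon> powr (-\<gamma>)"
        using assms pf by (intro powr_mono2') auto
      also have "\<epsilon> powr (-\<gamma>) = exp (\<gamma> * L)"
        using assms by (simp add: powr_def ln_div)
      also have "\<dots> \<le> 1 + 2 * (\<gamma> * L)"
      proof (rule real_exp_bound_lemma)
        have "\<epsilon>^2 \<le> 1" using assms by (simp add: power_le_one)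
        then show "\<gamma> * L \<le> 1/2" using pf(4) by simp
        show "0 \<le> \<gamma> * L" using pf(2,3) by simp
      qed
      finally have ap: "a powr (-\<gamma>) \<le> 1 + 2*(\<gamma>*L)" .
      have "p*a*(1-b) / m powr \<gamma> = p*a*(1-b) * a powr (-\<gamma>)"
        using \<open>m = a\<close> by (simp add: powr_minus divide_inverse)
      also have "\<dots> \<le> p*a*(1-b) * (1 + 2*(\<gamma>*L))"
        using ap assms by (intro mult_left_mono) auto
      also have "\<dots> \<le> p*a*(1-b) + p*\<gamma>*a*(2*L)"
      proof -
        have "p*a*(1-b)*(2*(\<gamma>*L)) \<le> p*a*1*(2*(\<gamma>*L))"
          using assms pf by (intro mult_right_mono mult_left_mono) auto
        then show ?thesis by (simp add: algebra_simps)
      qed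
      finally show ?thesis using e3 by simp
    qed
  qed
  have "p < (p-\<epsilon>)*a*b + (p*(1-a) + p*\<gamma>*a) + (p*a*(1-b) + p*\<gamma>*a*(2*L))"
    using assms(11,18) h2 h3 by linarith
  then have "\<epsilon>*a*b < p*\<gamma>*a*(1+2*L)" by (simp add: algebra_simps)
  also have "\<dots> \<le> 1*\<gamma>*a*(1+2*L)"
    using assms pf by (intro mult_right_mono) auto
  finally have "a * (\<epsilon>*b) < a * (\<gamma>*(1+2*L))" by (simp add: algebra_simps)
  moreover have a0: "a > 0" using assms(1,5) by linarith
  ultimately have "\<epsilon>*b < \<gamma>*(1+2*L)" by (simp only: mult_less_cancel_left_pos[OF a0])
  moreover have "\<epsilon>*\<epsilon> \<le> \<epsilon>*b" using assms by (intro mult_left_mono) auto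
  ultimately have "\<epsilon>*\<epsilon> < \<gamma>*(1+2*L)" by linarith
  moreover have "\<epsilon>^2 = \<epsilon>*\<epsilon>" by (simp add: power2_eq_square)
  ultimately show False using pf(6) by linarith
qed

lemma deg_real:
  fixes k p D \<gamma> \<epsilon> :: real
  assumes "k \<ge> 2" "0 < \<gamma>" "\<gamma> < \<epsilon>" "\<epsilon> \<le> 1" "0 \<le> p" "p \<le> 1" "D < (p-\<epsilon>)*k"
    "(p*k^2 - D)/((k-1)*k) * (k-1) powr \<gamma> \<le> p * k powr \<gamma>"
  shows False
proof -
  have g1: "\<gamma> \<le> 1" using assms(3,4) by linarith
  have "k powr \<gamma> = (k-1) powr \<gamma> * (k/(k-1)) powr \<gamma>"
    using assms by (simp flip: powr_mult)
  moreover have "(k/(k-1)) powr \<gamma> \<le> \<gamma>*(k/(k-1)) + (1-\<gamma>)"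
    using bern[of \<gamma> "k/(k-1)"] assms g1 by simp
  moreover have "\<gamma>*(k/(k-1)) + (1-\<gamma>) = 1 + \<gamma>/(k-1)"
    using assms by (simp add: field_simps)
  ultimately have kp: "k powr \<gamma> \<le> (k-1) powr \<gamma> * (1 + \<gamma>/(k-1))"
    using assms by (simp add: mult_left_mono)
  have pos: "(k-1) powr \<gamma> > 0" using assms by simp
  have "(p*k^2 - D)/((k-1)*k) * (k-1) powr \<gamma> \<le> p * ((k-1) powr \<gamma> * (1 + \<gamma>/(k-1)))"
    using assms(8) kp assms by (meson order_trans mult_left_mono)
  then have "((p*k^2 - D)/((k-1)*k)) * (k-1) powr \<gamma> \<le> (p * (1 + \<gamma>/(k-1))) * (k-1) powr \<gamma>"
    by (simp add: algebra_simps)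
  then have "(p*k^2 - D)/((k-1)*k) \<le> p * (1 + \<gamma>/(k-1))"
    using pos by (rule mult_right_le_imp_le)
  then have "p*k^2 - D \<le> p * (1 + \<gamma>/(k-1)) * ((k-1)*k)"
    using assms by (simp add: field_simps)
  also have "\<dots> = p*k*(k-1) + p*\<gamma>*k" using assms by (simp add: field_simps)
  finally have "p*k^2 - D \<le> p*k*(k-1) + p*\<gamma>*k" .
  moreover have "p*k^2 - D > p*k*(k-1) + \<epsilon>*k"
    using assms(7) by (simp add: algebra_simps power2_eq_square)
  ultimately have "\<epsilon>*k < p*\<gamma>*k" by simp
  also have "\<dots> \<le> \<gamma>*k" using assms by (intro mult_right_mono) (auto simp: mult_le_cancel_right1)
  finally show False using assms by simp
qed




definition ec :: "('a \<times> 'a) set \<Rightarrow> 'a set \<Rightarrow> 'a set \<Rightarrow> nat" where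
  "ec F X Y = card (F \<inter> (X \<times> Y))"

lemma ec_converse: "ec (converse F) Y X = ec F X Y"
proof -
  have "converse F \<inter> (Y \<times> X) = prod.swap ` (F \<inter> (X \<times> Y))" by auto
  moreover have "inj_on prod.swap (F \<inter> (X \<times> Y))" by (auto simp: inj_on_def)
  ultimately show ?thesis unfolding ec_def by (simp add: card_image)
qed

lemma ec_le: "finite X \<Longrightarrow> finite Y \<Longrightarrow> ec F X Y \<le> card X * card Y"
  unfolding ec_def by (metis card_cartesian_product card_mono finite_SigmaI inf_le2)

lemma ec_union_X:
  assumes "finite X1" "finite X2" "finite Y" "X1 \<inter> X2 = {}"
  shows "ec F (X1 \<union> X2) Y = ec F X1 Y + ec F X2 Y"
proof -
  have "F \<inter> ((X1 \<union> X2) \<times> Y) = (F \<inter> (X1 \<times> Y)) \<union> (F \<inter> (X2 \<times> Y))" by auto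
  moreover have "finite (F \<inter> (X1 \<times> Y))" "finite (F \<inter> (X2 \<times> Y))" using assms by auto
  moreover have "(F \<inter> (X1 \<times> Y)) \<inter> (F \<inter> (X2 \<times> Y)) = {}" using assms by auto
  ultimately show ?thesis unfolding ec_def by (simp add: card_Un_disjoint)
qed

lemma ec_union_Y:
  assumes "finite X" "finite Y1" "finite Y2" "Y1 \<inter> Y2 = {}"
  shows "ec F X (Y1 \<union> Y2) = ec F X Y1 + ec F X Y2"
  using ec_union_X[of Y1 Y2 X "converse F"] assms by (simp add: ec_converse)

lemma ec_single_X: "ec F {x} Y = card {y\<in>Y. (x,y)\<in>F}"
proof -
  have "F \<inter> ({x} \<times> Y) = (\<lambda>y. (x,y)) ` {y\<in>Y. (x,y)\<in>F}" by auto
  then show ?thesis unfolding ec_def by (simp add: card_image inj_on_def)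
qed

lemma ec_single_Y: "ec F X {y} = card {x\<in>X. (x,y)\<in>F}"
  using ec_single_X[of "converse F" y X] by (simp add: ec_converse)

lemma ec_sum_Y:
  assumes "finite X" "finite Y"
  shows "ec F X Y = (\<Sum>y\<in>Y. card {x\<in>X. (x,y)\<in>F})"
  using assms(2)
proof (induction Y rule: finite_induct)
  case empty then show ?case by (simp add: ec_def)
next
  case (insert y Y)
  have "ec F X (insert y Y) = ec F X ({y} \<union> Y)" by simp
  also have "\<dots> = ec F X {y} + ec F X Y"
    using insert assms by (intro ec_union_Y) auto
  finally show ?case using insert by (simp add: ec_single_Y)
qed

lemma low_vertex:
  assumes "finite X" "finite Y" "Y \<noteq> {}"
  shows "\<exists>y\<in>Y. real (card {x\<in>X. (x,y)\<in>F}) * card Y \<le> real (ec F X Y)"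
proof (rule ccontr)
  assume "\<not> ?thesis"
  then have h: "\<forall>y\<in>Y. real (ec F X Y) < real (card {x\<in>X. (x,y)\<in>F}) * card Y" by auto
  have "(\<Sum>y\<in>Y. real (ec F X Y)) < (\<Sum>y\<in>Y. real (card {x\<in>X. (x,y)\<in>F}) * card Y)"
    by (rule sum_strict_mono) (use h assms in auto)
  also have "\<dots> = real (ec F X Y) * card Y"
    using ec_sum_Y[OF assms(1,2), of F] by (simp add: sum_distrib_right)
  finally show False by simp
qed

lemma cut_Y:
  assumes "finite X" "finite Y" "s \<le> card Y"
  shows "\<exists>Y0\<subseteq>Y. card Y0 = s \<and> real (ec F X Y) * s \<le> real (ec F X Y0) * card Y"
  using assms
proof (induction "card Y - s" arbitrary: Y)
  case 0
  then have "card Y = s" by simp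
  then show ?case by (intro exI[of _ Y]) auto
next
  case (Suc m)
  then have ne: "Y \<noteq> {}" by auto
  obtain y where y: "y \<in> Y" and ylow: "real (card {x\<in>X. (x,y)\<in>F}) * card Y \<le> real (ec F X Y)"
    using low_vertex[OF assms(1) Suc.prems(2) ne] by blast
  define Y' where "Y' = Y - {y}"
  have cY': "card Y' = card Y - 1" using y Suc.prems unfolding Y'_def by simp
  have "m = card Y' - s" using Suc.hyps(2) cY' by simp
  moreover have "s \<le> card Y'" using Suc.hyps(2) cY' by simp
  ultimately obtain Y0 where Y0: "Y0 \<subseteq> Y'" "card Y0 = s"
    "real (ec F X Y') * s \<le> real (ec F X Y0) * card Y'"
    using Suc.hyps(1)[of Y'] Suc.prems unfolding Y'_def by auto
  have split: "ec F X Y = ec F X Y' + card {x\<in>X. (x,y)\<in>F}"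
  proof -
    have "Y = Y' \<union> {y}" using y unfolding Y'_def by auto
    then have "ec F X Y = ec F X (Y' \<union> {y})" by simp
    also have "\<dots> = ec F X Y' + ec F X {y}"
      using Suc.prems unfolding Y'_def by (intro ec_union_Y) auto
    finally show ?thesis by (simp add: ec_single_Y)
  qed
  define a where "a = real (ec F X Y)"
  define b where "b = real (ec F X Y')"
  define z where "z = real (ec F X Y0)"
  define D where "D = real (card {x\<in>X. (x,y)\<in>F})"
  define c where "c = real (card Y')"
  have cY: "real (card Y) = c + 1" using cY' ne Suc.prems unfolding c_def
    by (metis One_nat_def Suc_pred card_gt_0_iff of_nat_Suc add.commute)
  have abD: "a = b + D" unfolding a_def b_def D_def using split by simp
  have Dc: "D * (c+1) \<le> a" using ylow cY unfolding D_def a_def by simp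
  have bz: "b * s \<le> z * c" using Y0(3) unfolding b_def z_def c_def by simp
  have "a * s \<le> z * (c+1)"
  proof (cases "c = 0")
    case True
    then have "s = 0" using \<open>s \<le> card Y'\<close> unfolding c_def by simp
    moreover have "c \<ge> 0" unfolding c_def by simp
    ultimately show ?thesis unfolding z_def by simp
  next
    case False
    then have c0: "c > 0" unfolding c_def by simp
    have "a * c \<le> b * (c+1)" using abD Dc by (simp add: algebra_simps)
    then have "a * c * s \<le> b * (c+1) * s" by (intro mult_right_mono) auto
    also have "\<dots> = (b*s) * (c+1)" by (simp add: algebra_simps)
    also have "\<dots> \<le> (z*c) * (c+1)" using bz c0 by (intro mult_right_mono) auto
    finally have "c * (a*s) \<le> c * (z*(c+1))" by (simp add: algebra_simps)
    then show ?thesis using c0 by simp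
  qed
  then show ?case using Y0 cY unfolding a_def z_def Y'_def by (intro exI[of _ Y0]) auto
qed

lemma cut_X:
  assumes "finite X" "finite Y" "s \<le> card X"
  shows "\<exists>X0\<subseteq>X. card X0 = s \<and> real (ec F X Y) * s \<le> real (ec F X0 Y) * card X"
  using cut_Y[OF assms(2,1,3), of "converse F"] by (simp add: ec_converse)

definition Phi :: "real \<Rightarrow> ('a \<times> 'a) set \<Rightarrow> 'a set \<Rightarrow> 'a set \<Rightarrow> real" where
  "Phi \<gamma> F X Y = real (ec F X Y) / (real (card X) * real (card Y)) * real (min (card X) (card Y)) powr \<gamma>"

lemma Phi_converse: "Phi \<gamma> (converse F) Y X = Phi \<gamma> F X Y"
  unfolding Phi_def by (simp add: ec_converse min.commute mult.commute)




lemma scale: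
  fixes s t m k E p \<gamma> :: real
  assumes "0<s" "0<t" "0<m" "0<k" "E/(s*t) * m powr \<gamma> \<le> p * k powr \<gamma>"
  shows "E/k^2 * (m/k) powr \<gamma> \<le> p*((s/k)*(t/k))"
proof -
  have kp: "k powr \<gamma> > 0" using assms by simp
  have "E * m powr \<gamma> \<le> p * k powr \<gamma> * (s*t)"
    using assms(5) assms by (simp add: field_simps)
  then have "E * m powr \<gamma> / (k^2 * k powr \<gamma>) \<le> p * k powr \<gamma> * (s*t) / (k^2 * k powr \<gamma>)"
    using kp assms by (intro divide_right_mono) auto
  then show ?thesis using kp assms by (simp add: powr_divide field_simps power2_eq_square)
qed

lemma core_reg:
  fixes X Y X' Y' :: "'a set" and F and k :: nat and \<epsilon> \<gamma> L p :: real
  assumes fin: "finite X" "finite Y" and ck: "card X = k" "card Y = k" "k > 0"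
    and par: "0 < \<epsilon>" "\<epsilon> < 1/12" "L = ln (1/\<epsilon>)" "\<gamma> = \<epsilon>^2/(10*L)"
    and pdef: "p = real (ec F X Y) / (real k * real k)" and ppos: "p > 0"
    and max: "\<And>X0 Y0. X0 \<subseteq> X \<Longrightarrow> Y0 \<subseteq> Y \<Longrightarrow> X0 \<noteq> {} \<Longrightarrow> Y0 \<noteq> {} \<Longrightarrow> Phi \<gamma> F X0 Y0 \<le> Phi \<gamma> F X Y"
    and sub: "X' \<subseteq> X" "Y' \<subseteq> Y" "\<epsilon> * k \<le> card X'" "\<epsilon> * k \<le> card Y'"
  shows "\<bar>p - real (ec F X' Y') / (real (card X') * real (card Y'))\<bar> \<le> \<epsilon>"
proof -
  note pf = param_facts[OF par]
  define kr where "kr = real k"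
  have kr0: "kr > 0" using ck unfolding kr_def by simp
  have "real (ec F X Y) \<le> real k * real k" using ec_le[OF fin, of F] ck
    by (metis of_nat_le_iff of_nat_mult)
  then have p1: "p \<le> 1" unfolding pdef using kr0 kr_def by simp
  have PhiXY: "Phi \<gamma> F X Y = p * kr powr \<gamma>"
    unfolding Phi_def pdef kr_def using ck by simp
  define x' where "x' = card X'"
  define y' where "y' = card Y'"
  have finX': "finite X'" "finite Y'" using sub fin finite_subset by auto
  have x'0: "real x' > 0" using sub(3) par kr0 kr_def x'_def
    by (metis mult_pos_pos order_less_le_trans)
  have y'0: "real y' > 0" using sub(4) par kr0 kr_def y'_def
    by (metis mult_pos_pos order_less_le_trans)
  have ne: "X' \<noteq> {}" "Y' \<noteq> {}" using x'0 y'0 x'_def y'_def by auto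
  define q where "q = real (ec F X' Y') / (real x' * real y')"
  have x'k: "x' \<le> k" "y' \<le> k" using sub fin ck card_mono x'_def y'_def by metis+
  have up: "\<not> q > p + \<epsilon>"
  proof
    assume qb: "q > p + \<epsilon>"
    have mn: "real (min x' y') \<ge> \<epsilon> * kr" using sub x'_def y'_def kr_def by simp
    have "p * kr powr \<gamma> < ((p+\<epsilon>) * \<epsilon> powr \<gamma>) * kr powr \<gamma>"
      using up_real[OF par, of p] ppos p1 kr0 by (intro mult_strict_right_mono) auto
    also have "\<dots> = (p+\<epsilon>) * (\<epsilon> * kr) powr \<gamma>" using par kr0 by (simp add: powr_mult)
    also have "\<dots> \<le> (p+\<epsilon>) * real (min x' y') powr \<gamma>"
      using mn pf par kr0 ppos by (intro mult_left_mono powr_mono2) auto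
    also have "\<dots> \<le> q * real (min x' y') powr \<gamma>"
      using qb by (intro mult_right_mono) auto
    also have "\<dots> = Phi \<gamma> F X' Y'" unfolding Phi_def q_def x'_def y'_def by simp
    also have "\<dots> \<le> p * kr powr \<gamma>" using max[OF sub(1,2) ne] PhiXY by simp
    finally show False by simp
  qed
  have down: "\<not> q < p - \<epsilon>"
  proof
    assume qb: "q < p - \<epsilon>"
    define X'' where "X'' = X - X'"
    define Y'' where "Y'' = Y - Y'"
    have fin'': "finite X''" "finite Y''" using fin unfolding X''_def Y''_def by auto
    have cX'': "real (card X'') = kr - real x'"
      using card_Diff_subset[OF finX'(1) sub(1)] ck x'k unfolding X''_def kr_def x'_def by simp
    have cY'': "real (card Y'') = kr - real y'"
      using card_Diff_subset[OF finX'(2) sub(2)] ck x'k unfolding Y''_def kr_def y'_def by simp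
    have s1: "ec F X Y = ec F X' Y + ec F X'' Y"
    proof -
      have "X = X' \<union> X''" using sub unfolding X''_def by auto
      then have "ec F X Y = ec F (X' \<union> X'') Y" by simp
      also have "\<dots> = ec F X' Y + ec F X'' Y"
        using finX' fin'' fin by (intro ec_union_X) (auto simp: X''_def)
      finally show ?thesis .
    qed
    have s2: "ec F X' Y = ec F X' Y' + ec F X' Y''"
    proof -
      have "Y = Y' \<union> Y''" using sub unfolding Y''_def by auto
      then have "ec F X' Y = ec F X' (Y' \<union> Y'')" by simp
      also have "\<dots> = ec F X' Y' + ec F X' Y''"
        using finX' fin'' fin by (intro ec_union_Y) (auto simp: Y''_def)
      finally show ?thesis .
    qed
    define a where "a = real x' / kr"
    define b where "b = real y' / kr"
    define e1 where "e1 = real (ec F X' Y') / kr^2"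
    define e2 where "e2 = real (ec F X'' Y) / kr^2"
    define e3 where "e3 = real (ec F X' Y'') / kr^2"
    show False
    proof (rule down_real[OF par, of a b p e1 e2 e3])
      show "\<epsilon> \<le> a" using sub(3) kr0 unfolding a_def x'_def kr_def by (simp add: field_simps)
      show "a \<le> 1" using x'k kr0 unfolding a_def kr_def by simp
      show "\<epsilon> \<le> b" using sub(4) kr0 unfolding b_def y'_def kr_def by (simp add: field_simps)
      show "b \<le> 1" using x'k kr0 unfolding b_def kr_def by simp
      show "0 < p" "p \<le> 1" using ppos p1 by auto
      show "0 \<le> e2" "0 \<le> e3" unfolding e2_def e3_def by auto
      have "real (ec F X' Y') = q * (real x' * real y')" unfolding q_def using x'0 y'0 by simp
      also have "\<dots> < (p-\<epsilon>) * (real x' * real y')"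
        using qb x'0 y'0 by (intro mult_strict_right_mono) auto
      finally show "e1 < (p-\<epsilon>)*a*b" unfolding e1_def a_def b_def using kr0
        by (simp add: field_simps power2_eq_square)
      show "e1 + e2 + e3 = p" unfolding e1_def e2_def e3_def pdef kr_def
        using s1 s2 by (simp add: power2_eq_square add_divide_distrib)
      show "e2 * (1-a) powr \<gamma> \<le> p*(1-a)" if a1: "a < 1"
      proof -
        have "real x' < kr" using a1 kr0 unfolding a_def by simp
        then have c0: "real (card X'') > 0" using cX'' by simp
        then have "X'' \<noteq> {}" by auto
        have "X'' \<subseteq> X" unfolding X''_def by auto
        have "Phi \<gamma> F X'' Y \<le> p * kr powr \<gamma>"
          using max[OF \<open>X'' \<subseteq> X\<close> order_refl \<open>X'' \<noteq> {}\<close>] ne sub(2) PhiXY by auto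
        moreover have "min (card X'') (card Y) = card X''"
          using c0 cX'' ck x'0 unfolding kr_def by simp
        ultimately have "real (ec F X'' Y) / (real (card X'') * kr) * real (card X'') powr \<gamma> \<le> p * kr powr \<gamma>"
          unfolding Phi_def kr_def using ck by simp
        from scale[OF c0 kr0 c0 kr0 this]
        have "e2 * (real (card X'')/kr) powr \<gamma> \<le> p * ((real (card X'')/kr) * (kr/kr))"
          unfolding e2_def by simp
        moreover have "real (card X'')/kr = 1 - a" using cX'' kr0 unfolding a_def by (simp add: field_simps)
        ultimately show ?thesis using kr0 by simp
      qed
      show "e2 = 0" if "a = 1"
      proof -
        have "real x' = kr" using that kr0 unfolding a_def by simp
        then have "card X'' = 0" using cX'' by simp
        then have "X'' = {}" using fin'' by simp
        then show ?thesis unfolding e2_def by (simp add: ec_def)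
      qed
      show "e3 * (min a (1-b)) powr \<gamma> \<le> p*(a*(1-b))" if b1: "b < 1"
      proof -
        have "real y' < kr" using b1 kr0 unfolding b_def by simp
        then have c0: "real (card Y'') > 0" using cY'' by simp
        then have "Y'' \<noteq> {}" by auto
        have "Y'' \<subseteq> Y" unfolding Y''_def by auto
        have "Phi \<gamma> F X' Y'' \<le> p * kr powr \<gamma>"
          using max[OF sub(1) \<open>Y'' \<subseteq> Y\<close> ne(1) \<open>Y'' \<noteq> {}\<close>] PhiXY by auto
        then have "real (ec F X' Y'') / (real x' * real (card Y'')) * real (min x' (card Y'')) powr \<gamma> \<le> p * kr powr \<gamma>"
          unfolding Phi_def x'_def by simp
        moreover have m0: "real (min x' (card Y'')) > 0" using x'0 c0 by simp
        ultimately have "e3 * (real (min x' (card Y''))/kr) powr \<gamma> \<le> p * ((real x'/kr) * (real (card Y'')/kr))"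
          using scale[OF x'0 c0 m0 kr0] unfolding e3_def by simp
        moreover have "real (card Y'')/kr = 1 - b" using cY'' kr0 unfolding b_def by (simp add: field_simps)
        moreover have "real (min x' (card Y''))/kr = min a (1-b)"
        proof -
          have "real (min x' (card Y'')) = min (real x') (real (card Y''))" by simp
          then show ?thesis using kr0 \<open>real (card Y'')/kr = 1 - b\<close> unfolding a_def
            by (simp add: min_divide_distrib_right)
        qed
        ultimately show ?thesis unfolding a_def by simp
      qed
      show "e3 = 0" if "b = 1"
      proof -
        have "real y' = kr" using that kr0 unfolding b_def by simp
        then have "card Y'' = 0" using cY'' by simp
        then have "Y'' = {}" using fin'' by simp
        then show ?thesis unfolding e3_def by (simp add: ec_def)
      qed
    qed
  qed
  show ?thesis using up down unfolding q_def x'_def y'_def by linarith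
qed

lemma core_deg:
  fixes X Y :: "'a set" and F and k :: nat and \<epsilon> \<gamma> L p :: real
  assumes fin: "finite X" "finite Y" and ck: "card X = k" "card Y = k" "k > 0"
    and par: "0 < \<epsilon>" "\<epsilon> < 1/12" "L = ln (1/\<epsilon>)" "\<gamma> = \<epsilon>^2/(10*L)"
    and pdef: "p = real (ec F X Y) / (real k * real k)"
    and max: "\<And>X0 Y0. X0 \<subseteq> X \<Longrightarrow> Y0 \<subseteq> Y \<Longrightarrow> X0 \<noteq> {} \<Longrightarrow> Y0 \<noteq> {} \<Longrightarrow> Phi \<gamma> F X0 Y0 \<le> Phi \<gamma> F X Y"
    and x: "x \<in> X"
  shows "real (card {y\<in>Y. (x,y)\<in>F}) \<ge> (p-\<epsilon>) * k"
proof (rule ccontr)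
  assume "\<not> ?thesis"
  then have Dl: "real (card {y\<in>Y. (x,y)\<in>F}) < (p-\<epsilon>) * k" by simp
  note pf = param_facts[OF par]
  define D where "D = real (card {y\<in>Y. (x,y)\<in>F})"
  define kr where "kr = real k"
  have kr0: "kr > 0" using ck unfolding kr_def by simp
  have "real (ec F X Y) \<le> real k * real k" using ec_le[OF fin, of F] ck
    by (metis of_nat_le_iff of_nat_mult)
  then have p1: "p \<le> 1" unfolding pdef using kr0 kr_def by simp
  have p0: "p \<ge> 0" unfolding pdef by simp
  define X0 where "X0 = X - {x}"
  have split: "ec F X Y = ec F X0 Y + card {y\<in>Y. (x,y)\<in>F}"
  proof -
    have "X = X0 \<union> {x}" using x unfolding X0_def by auto
    then have "ec F X Y = ec F (X0 \<union> {x}) Y" by simp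
    also have "\<dots> = ec F X0 Y + ec F {x} Y"
      using fin unfolding X0_def by (intro ec_union_X) auto
    finally show ?thesis by (simp add: ec_single_X)
  qed
  have cX0: "card X0 = k - 1" using x fin ck unfolding X0_def by simp
  show False
  proof (cases "k = 1")
    case True
    then have "X0 = {}" using cX0 fin unfolding X0_def by auto
    then have "real (ec F X Y) = D" using split unfolding D_def by (simp add: ec_def)
    then have "p = D" unfolding pdef using True by simp
    then show False using Dl True par unfolding D_def by simp
  next
    case False
    then have k2: "kr \<ge> 2" using ck unfolding kr_def by simp
    have "X0 \<noteq> {}" using cX0 False ck by auto
    moreover have "Y \<noteq> {}" using ck by auto
    ultimately have "Phi \<gamma> F X0 Y \<le> Phi \<gamma> F X Y"
      using max[of X0 Y] unfolding X0_def by auto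
    moreover have "Phi \<gamma> F X Y = p * kr powr \<gamma>"
      unfolding Phi_def pdef kr_def using ck by simp
    moreover have "Phi \<gamma> F X0 Y = (p*kr^2 - D)/((kr-1)*kr) * (kr-1) powr \<gamma>"
    proof -
      have "real (ec F X0 Y) = p*kr^2 - D"
        using split kr0 unfolding pdef D_def kr_def by (simp add: power2_eq_square)
      moreover have "real (card X0) = kr - 1" using cX0 ck unfolding kr_def by simp
      moreover have "min (card X0) (card Y) = card X0" using cX0 ck by simp
      ultimately show ?thesis unfolding Phi_def using ck kr_def by simp
    qed
    ultimately have "(p*kr^2 - D)/((kr-1)*kr) * (kr-1) powr \<gamma> \<le> p * kr powr \<gamma>" by simp
    then show False
      using deg_real[OF k2 pf(3) pf(5) _ p0 p1, of D] Dl par unfolding D_def kr_def by simp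
  qed
qed




lemma frac_aux:
  fixes a b x y :: real
  assumes "0 < x" "0 < y" "a * x \<le> b * y"
  shows "a/(x*y) \<le> b/(x*x)"
proof -
  have "a/(x*y) = (a*x)/(x*x*y)" using assms by simp
  also have "\<dots> \<le> (b*y)/(x*x*y)" using assms by (intro divide_right_mono) auto
  also have "\<dots> = b/(x*x)" using assms by simp
  finally show ?thesis .
qed

lemma extract_pair:
  fixes A B :: "'a set" and F and N :: nat and d \<epsilon> \<gamma> L :: real
  assumes fin: "finite A" "finite B" and cAB: "card A = N" "card B = N" "N > 0"
    and FAB: "F \<subseteq> A \<times> B"
    and par: "0 < \<epsilon>" "\<epsilon> < 1/12" "L = ln (1/\<epsilon>)" "\<gamma> = \<epsilon>^2/(10*L)"
    and d: "0 < d" "d \<le> 1" "bip_density A B F \<ge> d"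
  shows "\<exists>X Y. X \<subseteq> A \<and> Y \<subseteq> B \<and> card X = card Y \<and> real (card X) \<ge> d powr (1/\<gamma>) * N
    \<and> super_regular \<epsilon> (d-\<epsilon>) X Y (F \<inter> (X\<times>Y)) \<and> bip_density X Y (F \<inter> (X\<times>Y)) \<ge> d"
proof -
  note pf = param_facts[OF par]
  define P where "P = {(X,Y). X \<subseteq> A \<and> Y \<subseteq> B \<and> X \<noteq> {} \<and> Y \<noteq> {}}"
  define f where "f = (\<lambda>Q. Phi \<gamma> F (fst Q) (snd Q))"
  have finP: "finite P"
  proof (rule finite_subset)
    show "P \<subseteq> Pow A \<times> Pow B" unfolding P_def by auto
    show "finite (Pow A \<times> Pow B)" using fin by auto
  qed
  have ABP: "(A,B) \<in> P" unfolding P_def using cAB by auto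
  define m where "m = Max (f ` P)"
  have "m \<in> f ` P" unfolding m_def using finP ABP by (intro Max_in) auto
  then obtain Q0 where Q0: "Q0 \<in> P" "f Q0 = m" by auto
  have mge: "\<And>Q. Q \<in> P \<Longrightarrow> f Q \<le> m" unfolding m_def using finP by auto
  obtain X1 Y1 where XY1: "(X1,Y1) \<in> P" "f (X1,Y1) = m" using Q0 by (cases Q0) auto
  have fin1: "finite X1" "finite Y1" using XY1 fin unfolding P_def by (auto intro: finite_subset)
  have pos1: "card X1 > 0" "card Y1 > 0" using XY1 fin1 unfolding P_def by auto
  obtain X Y where XY: "(X,Y) \<in> P" "card X = card Y" "f (X,Y) = m"
  proof (cases "card X1 \<le> card Y1")
    case True
    obtain Y0 where Y0: "Y0 \<subseteq> Y1" "card Y0 = card X1"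
      "real (ec F X1 Y1) * card X1 \<le> real (ec F X1 Y0) * card Y1"
      using cut_Y[OF fin1 True, of F] by auto
    have "Y0 \<noteq> {}" using Y0 pos1 by auto
    then have inP: "(X1,Y0) \<in> P" using XY1 Y0 unfolding P_def by auto
    have "f (X1,Y1) \<le> f (X1,Y0)"
    proof -
      have "real (ec F X1 Y1) / (real (card X1) * real (card Y1)) \<le> real (ec F X1 Y0) / (real (card X1) * real (card X1))"
        using frac_aux[of "real (card X1)" "real (card Y1)"] Y0 pos1 by simp
      then have "real (ec F X1 Y1) / (real (card X1) * real (card Y1)) * real (card X1) powr \<gamma> \<le> real (ec F X1 Y0) / (real (card X1) * real (card X1)) * real (card X1) powr \<gamma>"
        by (rule mult_right_mono) simp
      then show ?thesis unfolding f_def Phi_def using True Y0 by (simp add: min_def)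
    qed
    then have "f (X1,Y0) = m" using mge[OF inP] XY1 by simp
    then show ?thesis using that inP Y0 by auto
  next
    case False
    then have F': "card Y1 \<le> card X1" by simp
    obtain X0 where X0: "X0 \<subseteq> X1" "card X0 = card Y1"
      "real (ec F X1 Y1) * card Y1 \<le> real (ec F X0 Y1) * card X1"
      using cut_X[OF fin1 F', of F] by auto
    have "X0 \<noteq> {}" using X0 pos1 by auto
    then have inP: "(X0,Y1) \<in> P" using XY1 X0 unfolding P_def by auto
    have "f (X1,Y1) \<le> f (X0,Y1)"
    proof -
      have "real (ec F X1 Y1) / (real (card Y1) * real (card X1)) \<le> real (ec F X0 Y1) / (real (card Y1) * real (card Y1))"
        using frac_aux[of "real (card Y1)" "real (card X1)"] X0 pos1 by simp
      then have "real (ec F X1 Y1) / (real (card Y1) * real (card X1)) * real (card Y1) powr \<gamma> \<le> real (ec F X0 Y1) / (real (card Y1) * real (card Y1)) * real (card Y1) powr \<gamma>"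
        by (rule mult_right_mono) simp
      moreover have "min (card X1) (card Y1) = card Y1" "min (card X0) (card Y1) = card Y1" using F' X0 by auto
      moreover have "real (card Y1) * real (card X1) = real (card X1) * real (card Y1)" by (rule mult.commute)
      ultimately show ?thesis unfolding f_def Phi_def using X0 by simp
    qed
    then have "f (X0,Y1) = m" using mge[OF inP] XY1 by simp
    then show ?thesis using that inP X0 by auto
  qed
  have XYsub: "X \<subseteq> A" "Y \<subseteq> B" "X \<noteq> {}" "Y \<noteq> {}" using XY unfolding P_def by auto
  have finXY: "finite X" "finite Y" using XYsub fin by (auto intro: finite_subset)
  define k where "k = card X"
  have ck: "card X = k" "card Y = k" "k > 0" using XY finXY XYsub unfolding k_def by auto
  have max: "Phi \<gamma> F X0 Y0 \<le> Phi \<gamma> F X Y" if "X0 \<subseteq> X" "Y0 \<subseteq> Y" "X0 \<noteq> {}" "Y0 \<noteq> {}" for X0 Y0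
  proof -
    have "(X0,Y0) \<in> P" using that XYsub unfolding P_def by auto
    then show ?thesis using mge XY unfolding f_def by fastforce
  qed
  define p where "p = real (ec F X Y) / (real k * real k)"
  define kr where "kr = real k"
  have kr0: "kr > 0" using ck unfolding kr_def by simp
  have "real (ec F X Y) \<le> real k * real k" using ec_le[OF finXY, of F] ck
    by (metis of_nat_le_iff of_nat_mult)
  then have p1: "p \<le> 1" unfolding p_def using kr0 kr_def by simp
  have PhiXY: "Phi \<gamma> F X Y = p * kr powr \<gamma>" unfolding Phi_def p_def kr_def using ck by simp
  have PhiAB: "Phi \<gamma> F A B = bip_density A B F * real N powr \<gamma>"
    unfolding Phi_def bip_density_def ec_def using cAB by simp
  have kN: "kr \<le> real N" using card_mono[OF fin(1) XYsub(1)] ck cAB unfolding kr_def by simp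
  have big: "d * real N powr \<gamma> \<le> p * kr powr \<gamma>"
  proof -
    have "d * real N powr \<gamma> \<le> Phi \<gamma> F A B" using PhiAB d by (simp add: mult_right_mono)
    also have "\<dots> \<le> Phi \<gamma> F X Y" using max[of A B] mge[OF ABP] XY unfolding f_def by simp
    finally show ?thesis using PhiXY by simp
  qed
  have krp: "kr powr \<gamma> > 0" using kr0 by simp
  have pd: "p \<ge> d"
  proof -
    have "d * kr powr \<gamma> \<le> d * real N powr \<gamma>"
      using kN kr0 pf d by (intro mult_left_mono powr_mono2) auto
    then have "d * kr powr \<gamma> \<le> p * kr powr \<gamma>" using big by simp
    then show ?thesis using krp by simp
  qed
  have p0: "p > 0" using pd d by simp
  have size: "real (card X) \<ge> d powr (1/\<gamma>) * N"
  proof -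
    have "d * real N powr \<gamma> \<le> kr powr \<gamma>"
    proof -
      have "p * kr powr \<gamma> \<le> 1 * kr powr \<gamma>" using p1 by (intro mult_right_mono) auto
      then show ?thesis using big by simp
    qed
    then have "(d * real N powr \<gamma>) powr (1/\<gamma>) \<le> (kr powr \<gamma>) powr (1/\<gamma>)"
      using pf d by (intro powr_mono2) auto
    moreover have "(kr powr \<gamma>) powr (1/\<gamma>) = kr" using pf kr0 by (simp add: powr_powr)
    moreover have "(d * real N powr \<gamma>) powr (1/\<gamma>) = d powr (1/\<gamma>) * real N"
      using pf d by (simp add: powr_mult powr_powr)
    ultimately show ?thesis using ck kr_def by simp
  qed
  define G where "G = F \<inter> (X \<times> Y)"
  have bdXY: "bip_density X Y G = p"
  proof -
    have "G \<inter> (X \<times> Y) = F \<inter> (X \<times> Y)" unfolding G_def by auto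
    then show ?thesis unfolding bip_density_def p_def ec_def using ck by simp
  qed
  have reg: "eps_regular \<epsilon> X Y G"
    unfolding eps_regular_def
  proof (intro allI impI)
    fix X' Y' assume h: "X' \<subseteq> X" "Y' \<subseteq> Y" "\<epsilon> * real (card X) \<le> real (card X')"
      "\<epsilon> * real (card Y) \<le> real (card Y')"
    have "G \<inter> (X' \<times> Y') = F \<inter> (X' \<times> Y')" unfolding G_def using h by auto
    then have "bip_density X' Y' G = real (ec F X' Y') / (real (card X') * real (card Y'))"
      unfolding bip_density_def ec_def by simp
    then show "\<bar>bip_density X Y G - bip_density X' Y' G\<bar> \<le> \<epsilon>"
      using core_reg[OF finXY ck par p_def p0 max h(1,2)] h ck bdXY by simp
  qed
  have degX: "\<forall>x\<in>X. real (card {y\<in>Y. (x, y) \<in> G}) \<ge> (d-\<epsilon>) * real (card Y)"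
  proof
    fix x assume x: "x \<in> X"
    have "{y\<in>Y. (x, y) \<in> G} = {y\<in>Y. (x, y) \<in> F}" unfolding G_def using x by auto
    moreover have "real (card {y\<in>Y. (x,y)\<in>F}) \<ge> (p-\<epsilon>) * k"
      using core_deg[OF finXY ck par p_def max x] .
    moreover have "(d-\<epsilon>) * real k \<le> (p-\<epsilon>) * k" using pd by (intro mult_right_mono) auto
    ultimately have "real (card {y\<in>Y. (x, y) \<in> G}) \<ge> (d-\<epsilon>) * real k" by (metis order.trans)
    then show "real (card {y\<in>Y. (x, y) \<in> G}) \<ge> (d-\<epsilon>) * real (card Y)" using ck by simp
  qed
  have degY: "\<forall>y\<in>Y. real (card {x\<in>X. (x, y) \<in> G}) \<ge> (d-\<epsilon>) * real (card X)"
  proof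
    fix y assume y: "y \<in> Y"
    have "{x\<in>X. (x, y) \<in> G} = {x\<in>X. (y, x) \<in> converse F}" unfolding G_def using y by auto
    moreover have "p = real (ec (converse F) Y X) / (real k * real k)"
      unfolding p_def by (simp add: ec_converse)
    moreover have maxc: "Phi \<gamma> (converse F) Y0 X0 \<le> Phi \<gamma> (converse F) Y X"
      if "Y0 \<subseteq> Y" "X0 \<subseteq> X" "Y0 \<noteq> {}" "X0 \<noteq> {}" for Y0 X0
      using max[OF that(2,1,4,3)] by (simp add: Phi_converse)
    ultimately have "real (card {x\<in>X. (x, y) \<in> G}) \<ge> (p-\<epsilon>) * k"
      using core_deg[OF finXY(2,1) ck(2,1,3) par, of p "converse F" y] maxc y by simp
    moreover have "(d-\<epsilon>) * real k \<le> (p-\<epsilon>) * k" using pd by (intro mult_right_mono) auto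
    ultimately have "real (card {x\<in>X. (x, y) \<in> G}) \<ge> (d-\<epsilon>) * real k" by (metis order.trans)
    then show "real (card {x\<in>X. (x, y) \<in> G}) \<ge> (d-\<epsilon>) * real (card X)" using ck by simp
  qed
  show ?thesis
    using XYsub ck size reg degX degY bdXY pd unfolding super_regular_def G_def
    by (intro exI[of _ X] exI[of _ Y]) auto
qed




lemma iter:
  fixes A B :: "'a set" and E :: "('a \<times> 'a) set" and N :: nat and d \<epsilon> \<gamma> L \<mu> :: real
  assumes fin: "finite A" "finite B" and cAB: "card A = N" "card B = N" "N > 0"
    and EAB: "E \<subseteq> A \<times> B"
    and par: "0 < \<epsilon>" "\<epsilon> < 1/12" "L = ln (1/\<epsilon>)" "\<gamma> = \<epsilon>^2/(10*L)"
    and d: "0 < d" "d \<le> 1" and mu: "\<mu> = d powr (1/\<gamma>)"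
  shows "F \<subseteq> E \<Longrightarrow> \<exists>K::nat. \<exists>X Y :: nat \<Rightarrow> 'a set. \<exists>G :: nat \<Rightarrow> ('a \<times> 'a) set.
     (\<Union>i\<in>{0..K}. G i) = F \<and>
     (\<forall>i\<in>{0..K}. \<forall>j\<in>{0..K}. i \<noteq> j \<longrightarrow> G i \<inter> G j = {}) \<and>
     (\<forall>i\<in>{0..K}. balanced_bip_subgraph (X i) (Y i) (G i) A B E) \<and>
     (\<forall>i\<in>{1..K}. super_regular \<epsilon> (d - \<epsilon>) (X i) (Y i) (G i) \<and>
        bip_density (X i) (Y i) (G i) \<ge> d \<and>
        real (card (X i)) \<ge> \<mu> * N \<and> real (card (Y i)) \<ge> \<mu> * N) \<and>
     bip_density (X 0) (Y 0) (G 0) < d \<and>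
     real K * (d * \<mu>^2 * real N^2) \<le> real (card F)"
proof (induction "card F" arbitrary: F rule: less_induct)
  case less
  have finE: "finite E" using EAB fin by (meson finite_SigmaI finite_subset)
  have finF: "finite F" using less.prems finE finite_subset by auto
  show ?case
  proof (cases "bip_density A B F < d")
    case True
    show ?thesis
      apply (rule exI[of _ 0], rule exI[of _ "\<lambda>_. A"], rule exI[of _ "\<lambda>_. B"], rule exI[of _ "\<lambda>_. F"])
      using True less.prems EAB cAB unfolding balanced_bip_subgraph_def by auto
  next
    case False
    have FAB: "F \<subseteq> A \<times> B" using less.prems EAB by auto
    obtain X1 Y1 where XY1: "X1 \<subseteq> A" "Y1 \<subseteq> B" "card X1 = card Y1"
      "real (card X1) \<ge> \<mu> * N" "super_regular \<epsilon> (d-\<epsilon>) X1 Y1 (F \<inter> (X1\<times>Y1))"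
      "bip_density X1 Y1 (F \<inter> (X1\<times>Y1)) \<ge> d"
      using extract_pair[OF fin cAB FAB par d] False mu by auto
    define G1 where "G1 = F \<inter> (X1 \<times> Y1)"
    have mu0: "\<mu> > 0" using mu d by simp
    define kr where "kr = real (card X1)"
    have kr: "kr \<ge> \<mu> * N" using XY1 kr_def by simp
    have kr0: "kr > 0" using kr mu0 cAB by (smt (verit) mult_pos_pos of_nat_0_less_iff)
    have "d \<le> real (card (G1 \<inter> (X1\<times>Y1))) / (kr * kr)"
      using XY1(6) XY1(3) unfolding bip_density_def G1_def kr_def by simp
    moreover have "G1 \<inter> (X1\<times>Y1) = G1" unfolding G1_def by auto
    ultimately have "d * (kr*kr) \<le> real (card G1)" using kr0 by (simp add: field_simps)
    moreover have "d * (\<mu>^2 * real N^2) \<le> d * (kr * kr)"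
    proof -
      have "(\<mu> * N) * (\<mu> * N) \<le> kr * kr" using kr mu0 kr0 by (intro mult_mono) auto
      then show ?thesis using d by (intro mult_left_mono) (auto simp: power2_eq_square algebra_simps)
    qed
    ultimately have cG1: "d * \<mu>^2 * real N^2 \<le> real (card G1)" by (simp add: algebra_simps)
    have "d * \<mu>^2 * real N^2 > 0" using d mu0 cAB by simp
    then have G1ne: "card G1 > 0" using cG1 by linarith
    have G1F: "G1 \<subseteq> F" unfolding G1_def by auto
    define F' where "F' = F - G1"
    have cF': "card F' = card F - card G1" unfolding F'_def using finF G1F by (simp add: card_Diff_subset finite_subset)
    have cGF: "card G1 \<le> card F" using finF G1F card_mono by auto
    have lt: "card F' < card F" using cF' G1ne cGF by simp
    have F'E: "F' \<subseteq> E" using less.prems unfolding F'_def by auto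
    obtain K X Y G where IH:
      "(\<Union>i\<in>{0..K}. G i) = F'"
      "\<forall>i\<in>{0..K}. \<forall>j\<in>{0..K}. i \<noteq> j \<longrightarrow> G i \<inter> G j = {}"
      "\<forall>i\<in>{0..K}. balanced_bip_subgraph (X i) (Y i) (G i) A B E"
      "\<forall>i\<in>{1..K}. super_regular \<epsilon> (d - \<epsilon>) (X i) (Y i) (G i) \<and>
        bip_density (X i) (Y i) (G i) \<ge> d \<and>
        real (card (X i)) \<ge> \<mu> * N \<and> real (card (Y i)) \<ge> \<mu> * N"
      "bip_density (X 0) (Y 0) (G 0) < d"
      "real K * (d * \<mu>^2 * real N^2) \<le> real (card F')"
      using less.hyps[OF lt F'E] by blast
    define X' where "X' = (\<lambda>i. if i = Suc K then X1 else X i)"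
    define Y' where "Y' = (\<lambda>i. if i = Suc K then Y1 else Y i)"
    define G' where "G' = (\<lambda>i. if i = Suc K then G1 else G i)"
    have idx: "{0..Suc K} = insert (Suc K) {0..K}" by auto
    have GsubF': "G i \<subseteq> F'" if "i \<in> {0..K}" for i using IH(1) that by auto
    have U: "(\<Union>i\<in>{0..Suc K}. G' i) = F"
    proof -
      have "(\<Union>i\<in>{0..Suc K}. G' i) = G1 \<union> (\<Union>i\<in>{0..K}. G i)"
        unfolding idx G'_def by auto
      then show ?thesis using IH(1) G1F unfolding F'_def by auto
    qed
    have Dj: "\<forall>i\<in>{0..Suc K}. \<forall>j\<in>{0..Suc K}. i \<noteq> j \<longrightarrow> G' i \<inter> G' j = {}"
    proof (intro ballI impI)
      fix i j assume ij: "i \<in> {0..Suc K}" "j \<in> {0..Suc K}" "i \<noteq> j"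
      show "G' i \<inter> G' j = {}"
      proof (cases "i = Suc K")
        case True
        then have "j \<in> {0..K}" using ij by auto
        then show ?thesis using True GsubF'[of j] unfolding G'_def F'_def using ij by auto
      next
        case iF: False
        then have i': "i \<in> {0..K}" using ij by auto
        show ?thesis
        proof (cases "j = Suc K")
          case True
          then show ?thesis using iF GsubF'[OF i'] unfolding G'_def F'_def by auto
        next
          case False
          then have "j \<in> {0..K}" using ij by auto
          then show ?thesis using IH(2) i' ij iF False unfolding G'_def by auto
        qed
      qed
    qed
    have Bal: "\<forall>i\<in>{0..Suc K}. balanced_bip_subgraph (X' i) (Y' i) (G' i) A B E"
    proof
      fix i assume i: "i \<in> {0..Suc K}"
      show "balanced_bip_subgraph (X' i) (Y' i) (G' i) A B E"
      proof (cases "i = Suc K")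
        case True
        have "G1 \<subseteq> E \<inter> (X1 \<times> Y1)" using less.prems unfolding G1_def by auto
        then show ?thesis using True XY1(1-3) unfolding balanced_bip_subgraph_def X'_def Y'_def G'_def
          by simp
      next
        case False
        then have "i \<in> {0..K}" using i by auto
        then show ?thesis using IH(3) False unfolding X'_def Y'_def G'_def by simp
      qed
    qed
    have S: "\<forall>i\<in>{1..Suc K}. super_regular \<epsilon> (d - \<epsilon>) (X' i) (Y' i) (G' i) \<and>
        bip_density (X' i) (Y' i) (G' i) \<ge> d \<and>
        real (card (X' i)) \<ge> \<mu> * N \<and> real (card (Y' i)) \<ge> \<mu> * N"
    proof
      fix i assume i: "i \<in> {1..Suc K}"
      show "super_regular \<epsilon> (d - \<epsilon>) (X' i) (Y' i) (G' i) \<and>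
        bip_density (X' i) (Y' i) (G' i) \<ge> d \<and>
        real (card (X' i)) \<ge> \<mu> * N \<and> real (card (Y' i)) \<ge> \<mu> * N"
      proof (cases "i = Suc K")
        case True
        then show ?thesis using XY1 unfolding X'_def Y'_def G'_def G1_def by simp
      next
        case False
        then have "i \<in> {1..K}" using i by auto
        then show ?thesis using IH(4) False unfolding X'_def Y'_def G'_def by simp
      qed
    qed
    have Z: "bip_density (X' 0) (Y' 0) (G' 0) < d" using IH(5) unfolding X'_def Y'_def G'_def by simp
    have "real (Suc K) * (d * \<mu>^2 * real N^2) = real K * (d * \<mu>^2 * real N^2) + d * \<mu>^2 * real N^2"
      by (simp add: algebra_simps)
    also have "\<dots> \<le> real (card F') + real (card G1)" using IH(6) cG1 by simp
    also have "\<dots> = real (card F)" using cF' cGF by simp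
    finally have Kb: "real (Suc K) * (d * \<mu>^2 * real N^2) \<le> real (card F)" .
    show ?thesis
      apply (rule exI[of _ "Suc K"], rule exI[of _ X'], rule exI[of _ Y'], rule exI[of _ G'])
      using U Dj Bal S Z Kb by blast
  qed
qed

theorem theorem2p5:
  fixes A B :: "'a set" and E :: "('a \<times> 'a) set" and d \<epsilon> :: real and n :: nat
  assumes "0 < d" "d \<le> 1" "0 < \<epsilon>" "\<epsilon> < 1/12"
    and "finite A" "finite B" "A \<inter> B = {}" "E \<subseteq> A \<times> B"
    and "card A = card B"
    and "n = card A + card B"
    and "real n > exp (10 * ln (1/d) * ln (1/\<epsilon>) / \<epsilon>^2)"
  shows "\<exists>K::nat. \<exists>X Y :: nat \<Rightarrow> 'a set. \<exists>F :: nat \<Rightarrow> ('a \<times> 'a) set.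
     (\<Union>i\<in>{0..K}. F i) = E \<and>
     (\<forall>i\<in>{0..K}. \<forall>j\<in>{0..K}. i \<noteq> j \<longrightarrow> F i \<inter> F j = {}) \<and>
     (\<forall>i\<in>{0..K}. balanced_bip_subgraph (X i) (Y i) (F i) A B E) \<and>
     (\<forall>i\<in>{1..K}. super_regular \<epsilon> (d - \<epsilon>) (X i) (Y i) (F i) \<and>
        bip_density (X i) (Y i) (F i) \<ge> d \<and>
        real (card (X i)) \<ge> d powr ((10 / \<epsilon>^2) * ln (1/\<epsilon>)) * real n / 2 \<and>
        real (card (Y i)) \<ge> d powr ((10 / \<epsilon>^2) * ln (1/\<epsilon>)) * real n / 2) \<and>
     bip_density (X 0) (Y 0) (F 0) < d \<and>
     real K \<le> 2 * bip_density A B E * d powr (- (20 / \<epsilon>^2) * ln (1/\<epsilon>)) / d"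
proof -
  define N where "N = card A"
  define L where "L = ln (1/\<epsilon>)"
  define \<gamma> where "\<gamma> = \<epsilon>^2/(10*L)"
  define \<mu> where "\<mu> = d powr (1/\<gamma>)"
  have par: "0 < \<epsilon>" "\<epsilon> < 1/12" "L = ln (1/\<epsilon>)" "\<gamma> = \<epsilon>^2/(10*L)"
    using assms L_def \<gamma>_def by auto
  note pf = param_facts[OF par]
  have "real n > 0" using assms(11) by (smt (verit) exp_gt_zero)
  then have N0: "N > 0" using assms(9,10) N_def by simp
  have cA: "card A = N" using N_def by simp
  have "card B = N" using N_def assms(9) by simp
  then have cB: "card B = N" by simp
  have nN: "real n / 2 = real N" using assms(9,10) N_def by simp
  have c: "(10 / \<epsilon>^2) * ln (1/\<epsilon>) = 1/\<gamma>" using pf par unfolding \<gamma>_def L_def by simp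
  obtain K X Y F where R:
     "(\<Union>i\<in>{0..K}. F i) = E"
     "\<forall>i\<in>{0..K}. \<forall>j\<in>{0..K}. i \<noteq> j \<longrightarrow> F i \<inter> F j = {}"
     "\<forall>i\<in>{0..K}. balanced_bip_subgraph (X i) (Y i) (F i) A B E"
     "\<forall>i\<in>{1..K}. super_regular \<epsilon> (d - \<epsilon>) (X i) (Y i) (F i) \<and>
        bip_density (X i) (Y i) (F i) \<ge> d \<and>
        real (card (X i)) \<ge> \<mu> * N \<and> real (card (Y i)) \<ge> \<mu> * N"
     "bip_density (X 0) (Y 0) (F 0) < d"
     "real K * (d * \<mu>^2 * real N^2) \<le> real (card E)"
    using iter[OF assms(5,6) cA cB N0 assms(8) par assms(1,2) \<mu>_def, of E, OF subset_refl] by blast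
  have mu0: "\<mu> > 0" using \<mu>_def assms by simp
  have pos: "d * \<mu>^2 * real N^2 > 0" using mu0 N0 assms by simp
  have bd: "bip_density A B E = real (card E) / (real N * real N)"
    unfolding bip_density_def using assms(8,9) N_def by (simp add: Int_absorb2)
  have "d powr (- (20 / \<epsilon>^2) * ln (1/\<epsilon>)) = inverse (\<mu> * \<mu>)"
  proof -
    have "- (20 / \<epsilon>^2) * ln (1/\<epsilon>) = - ((10 / \<epsilon>^2) * ln (1/\<epsilon>) + (10 / \<epsilon>^2) * ln (1/\<epsilon>))"
      by (simp add: algebra_simps)
    then have "- (20 / \<epsilon>^2) * ln (1/\<epsilon>) = - (1/\<gamma> + 1/\<gamma>)" unfolding c .
    then show ?thesis unfolding \<mu>_def by (simp only: powr_minus powr_add)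
  qed
  then have rhs: "2 * bip_density A B E * d powr (- (20 / \<epsilon>^2) * ln (1/\<epsilon>)) / d
      = 2 * (real (card E) / (d * \<mu>^2 * real N^2))"
    using bd by (simp add: field_simps power2_eq_square)
  have "real K \<le> real (card E) / (d * \<mu>^2 * real N^2)"
    using R(6) pos by (simp add: field_simps)
  also have "\<dots> \<le> 2 * (real (card E) / (d * \<mu>^2 * real N^2))"
  proof -
    have "0 \<le> real (card E) / (d * \<mu>^2 * real N^2)" using pos by simp
    moreover have aux: "\<And>x::real. 0 \<le> x \<Longrightarrow> x \<le> 2*x" by simp
    ultimately show ?thesis by blast
  qed
  finally have Kb: "real K \<le> 2 * bip_density A B E * d powr (- (20 / \<epsilon>^2) * ln (1/\<epsilon>)) / d"
    unfolding rhs .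
  have eqm: "d powr ((10 / \<epsilon>^2) * ln (1/\<epsilon>)) * real n / 2 = \<mu> * real N"
    unfolding c \<mu>_def using nN by simp
  show ?thesis
    unfolding eqm
    apply (rule exI[of _ K], rule exI[of _ X], rule exI[of _ Y], rule exI[of _ F])
    using R Kb by (intro conjI)
qed


end
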